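(* Let $m$ be a square-free integer and let $B$ be a commutative algebra over $A=\mathbb{Z}/m\mathbb{Z}$ that is free of finite rank as an $A$-module. If $p>\operatorname{rk}_A(B)$ for all primes $p$ dividing $m$, then $\operatorname{Trad}(B/A)=\operatorname{nil}(B)$.
   Context: For commutative rings $A\subseteq B$ with $B$ free of finite rank over $A$, $\operatorname{Tr}_{B/A}:B\to A$ sends $x$ to the trace of the $A$-linear map $y\mapsto xy$ on $B$, and the trace radical is $\operatorname{Trad}(B/A)=\{x\in B: \operatorname{Tr}_{B/A}(xB)=0\}$. $\operatorname{nil}(B)$ is the ideal of nilpotent elements of $B$. *)

theory Defs
  imports "HOL-Computational_Algebra.Computational_Algebra"
begin

text \<open>A commutative ring B (a type of class comm_ring_1) with m * 1 = 0 is the same thing as a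
commutative Z/mZ-algebra. Scalars of Z/mZ are represented by integers, a scalar being zero
iff m divides it. The scalar c acts on B as multiplication by of_int c.\<close>

definition is_zmod_basis :: "int \<Rightarrow> nat \<Rightarrow> (nat \<Rightarrow> 'b::comm_ring_1) \<Rightarrow> bool" where
  "is_zmod_basis m n b \<longleftrightarrow>
     (\<forall>x. \<exists>c. x = (\<Sum>k<n. of_int (c k) * b k)) \<and>
     (\<forall>c. (\<Sum>k<n. of_int (c k) * b k) = 0 \<longrightarrow> (\<forall>k<n. m dvd c k))"

text \<open>Trace of multiplication by x with respect to the basis b (value in Z, read modulo m):
the sum of the diagonal entries of the matrix of y \<mapsto> x*y.\<close>
definition zmod_trace :: "nat \<Rightarrow> (nat \<Rightarrow> 'b::comm_ring_1) \<Rightarrow> 'b \<Rightarrow> int" where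
  "zmod_trace n b x =
     (\<Sum>j<n. (SOME c. x * b j = (\<Sum>k<n. of_int (c k) * b k)) j)"

definition trace_radical :: "int \<Rightarrow> nat \<Rightarrow> (nat \<Rightarrow> 'b::comm_ring_1) \<Rightarrow> 'b set" where
  "trace_radical m n b = {x. \<forall>y. m dvd zmod_trace n b (x * y)}"

definition nilradical :: "'b::comm_ring_1 set" where
  "nilradical = {x. \<exists>k::nat. x ^ k = 0}"

end

theory Submission
  imports Defs
begin


lemma squarefree_dvd_all:
  fixes m t :: int
  assumes sq: "squarefree m" and h: "\<forall>p. prime p \<and> p dvd m \<longrightarrow> p dvd t"
  shows "m dvd t"
proof (cases "t = 0")
  case True then show ?thesis by simp
next
  case False
  have m0: "m \<noteq> 0" using sq by (metis not_squarefree_0)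
  show ?thesis
  proof (rule multiplicity_le_imp_dvd[OF m0])
    fix p :: int assume p: "prime p"
    show "multiplicity p m \<le> multiplicity p t"
    proof (cases "p dvd m")
      case False then show ?thesis by (simp add: not_dvd_imp_multiplicity_0)
    next
      case True
      have "multiplicity p m \<le> 1" using sq m0 p squarefree_factorial_semiring'' by blast
      moreover have "p dvd t" using h p True by blast
      then have "1 \<le> multiplicity p t" using False p
        by (metis multiplicity_geI power_one_right prime_imp_prime_elem not_prime_unit)
      ultimately show ?thesis by linarith
    qed
  qed
qed

lemma fitting:
  fixes x :: "'b::comm_ring_1"
  assumes fin: "finite (UNIV :: 'b set)"
  shows "\<exists>K u. K \<ge> 1 \<and> x ^ K = x ^ (2 * K) * u"
proof -
  define R where "R k = range (\<lambda>y. x ^ k * y)" for k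
  have RS: "R (Suc k) = (\<lambda>y. x * y) ` R k" for k
    unfolding R_def by (auto simp: image_image mult.assoc)
  have Rsub: "R (Suc k) \<subseteq> R k" for k
    unfolding R_def by (auto simp: mult.assoc) (metis mult.left_commute rangeI)
  obtain k0 where k0: "\<forall>k. card (R k0) \<le> card (R k)"
    using ex_has_least_nat[of "\<lambda>_. True" 0 "\<lambda>k. card (R k)"] by blast
  have fR: "finite (R k)" for k using fin by (rule finite_subset[rotated]) auto
  have eq1: "R (Suc k0) = R k0"
    using card_subset_eq[OF fR Rsub] k0 by (meson Rsub card_seteq fR)
  have eqj: "R (k0 + j) = R k0" for j
  proof (induction j)
    case 0 then show ?case by simp
  next
    case (Suc j)
    have "R (k0 + Suc j) = (\<lambda>y. x * y) ` R (k0 + j)" using RS by simp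
    also have "\<dots> = (\<lambda>y. x * y) ` R k0" using Suc by simp
    also have "\<dots> = R k0" using RS eq1 by simp
    finally show ?case .
  qed
  define K where "K = Suc k0"
  have "R K = R (2 * K)"
    using eqj[of 1] eqj[of "k0 + 2"] unfolding K_def by (simp add: mult_2)
  moreover have "x ^ K \<in> R K" unfolding R_def by (metis mult_1_right rangeI)
  ultimately obtain u where "x ^ K = x ^ (2 * K) * u" unfolding R_def by auto
  moreover have "K \<ge> 1" unfolding K_def by simp
  ultimately show ?thesis by blast
qed




locale zb =
  fixes m :: int and n :: nat and b :: "nat \<Rightarrow> 'b::comm_ring_1"
  assumes basis: "is_zmod_basis m n b" and m0: "(of_int m :: 'b) = 0"
begin

lemma span_all: "\<exists>c. y = (\<Sum>k<n. of_int (c k) * b k)"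
  using basis unfolding is_zmod_basis_def by blast

lemma indep_b: "(\<Sum>k<n. of_int (c k) * b k) = 0 \<Longrightarrow> k < n \<Longrightarrow> m dvd c k"
  using basis unfolding is_zmod_basis_def by blast

lemma of_int_mult_m: "(of_int (m * j) :: 'b) = 0"
  by (simp add: m0)

lemma of_int_dvd_m: "m dvd c \<Longrightarrow> (of_int c :: 'b) = 0"
  using of_int_mult_m by (metis dvd_def)

lemma inj_of_int: assumes "n > 0" "(of_int c :: 'b) = 0" shows "m dvd c"
proof -
  have "(\<Sum>k<n. of_int (if k = 0 then c else 0) * b k) = (\<Sum>k<n. if k = 0 then of_int c * b k else 0)"
    by (rule sum.cong) auto
  also have "\<dots> = of_int c * b 0" using assms(1) by simp
  also have "\<dots> = 0" using assms(2) by simp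
  finally show ?thesis using indep_b[of "\<lambda>k. if k = 0 then c else 0" 0] assms(1) by simp
qed

definition co :: "'b \<Rightarrow> nat \<Rightarrow> int" where
  "co y = (SOME c. y = (\<Sum>k<n. of_int (c k) * b k))"

lemma co: "y = (\<Sum>k<n. of_int (co y k) * b k)"
  unfolding co_def using span_all by (rule someI_ex)

lemma tr_co: "zmod_trace n b z = (\<Sum>j<n. co (z * b j) j)"
  unfolding zmod_trace_def co_def ..

lemma finite_B: assumes "m \<noteq> 0" shows "finite (UNIV :: 'b set)"
proof -
  have "UNIV \<subseteq> (\<lambda>c. \<Sum>k<n. of_int (c k) * b k) ` (PiE {..<n} (\<lambda>_. {0..<\<bar>m\<bar>}))"
  proof
    fix y :: 'b
    have "y = (\<Sum>k<n. of_int (co y k) * b k)" by (rule co)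
    also have "\<dots> = (\<Sum>k<n. of_int ((restrict (\<lambda>k. co y k mod \<bar>m\<bar>) {..<n}) k) * b k)"
    proof (rule sum.cong[OF refl])
      fix k assume "k \<in> {..<n}"
      have "\<bar>m\<bar> dvd co y k - co y k mod \<bar>m\<bar>" by (simp add: mod_eq_0_iff_dvd minus_mod_eq_mult_div)
      then have "m dvd co y k - co y k mod \<bar>m\<bar>" using abs_dvd_iff by blast
      then have "(of_int (co y k - co y k mod \<bar>m\<bar>) :: 'b) = 0" by (rule of_int_dvd_m)
      then show "of_int (co y k) * b k = of_int ((restrict (\<lambda>k. co y k mod \<bar>m\<bar>) {..<n}) k) * b k"
        using \<open>k \<in> {..<n}\<close> by simp
    qed
    finally show "y \<in> (\<lambda>c. \<Sum>k<n. of_int (c k) * b k) ` (PiE {..<n} (\<lambda>_. {0..<\<bar>m\<bar>}))"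
      using assms by (intro image_eqI[of _ _ "restrict (\<lambda>k. co y k mod \<bar>m\<bar>) {..<n}"]) auto
  qed
  then show ?thesis by (rule finite_subset) (intro finite_imageI finite_PiE; simp)
qed

end




locale zbp = zb m n b for m :: int and n :: nat and b :: "nat \<Rightarrow> 'b::comm_ring_1" +
  fixes p :: int
  assumes pr: "prime p" and pm: "p dvd m" and npos: "n > 0" and mnz: "m \<noteq> 0"
begin

abbreviation eps :: 'b where "eps \<equiv> of_int (m div p)"

lemma eps_dvd: assumes "p dvd c" shows "eps * of_int c = 0"
proof -
  obtain d where c: "c = p * d" using assms by blast
  have "m div p * c = m * d" using pm c by auto
  then show ?thesis by (metis of_int_mult of_int_mult_m)
qed

lemma eps_zero_iff: "eps * of_int c = 0 \<longleftrightarrow> p dvd c"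
proof
  assume "eps * of_int c = 0"
  then have "(of_int (m div p * c) :: 'b) = 0" by simp
  then have "m dvd m div p * c" using inj_of_int npos by blast
  moreover have "m = p * (m div p)" using pm by simp
  moreover have "m div p \<noteq> 0"
    using mnz calculation(2) by auto
  ultimately show "p dvd c"
    by (metis dvd_mult_cancel_right mult.commute)
qed (rule eps_dvd)

lemma eps_cong: "p dvd (c - d) \<Longrightarrow> eps * of_int c = eps * of_int d"
  using eps_dvd[of "c - d"] by (simp add: algebra_simps)

lemma coord_unique:
  assumes "eps * (\<Sum>k<n. of_int (c k) * b k) = eps * (\<Sum>k<n. of_int (d k) * b k)" "k < n"
  shows "p dvd c k - d k"
proof -
  have "(\<Sum>k<n. of_int (m div p * (c k - d k)) * b k) =
        eps * (\<Sum>k<n. of_int (c k) * b k) - eps * (\<Sum>k<n. of_int (d k) * b k)"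
    by (simp add: sum_distrib_left algebra_simps sum_subtractf)
  also have "\<dots> = 0" using assms(1) by simp
  finally have "m dvd m div p * (c k - d k)"
    using indep_b[of "\<lambda>k. m div p * (c k - d k)" k] assms(2) by blast
  then have "eps * of_int (c k - d k) = 0" using of_int_dvd_m by (metis of_int_mult)
  then show ?thesis using eps_zero_iff by blast
qed

definition indep :: "(nat \<Rightarrow> 'b) \<Rightarrow> nat \<Rightarrow> bool" where
  "indep w N \<longleftrightarrow> (\<forall>c. eps * (\<Sum>i<N. of_int (c i) * w i) = 0 \<longrightarrow> (\<forall>i<N. p dvd c i))"

definition inspan :: "(nat \<Rightarrow> 'b) \<Rightarrow> nat \<Rightarrow> 'b \<Rightarrow> bool" where
  "inspan w N y \<longleftrightarrow> (\<exists>c. eps * y = eps * (\<Sum>i<N. of_int (c i) * w i))"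

lemma indepD: "indep w N \<Longrightarrow> eps * (\<Sum>i<N. of_int (c i) * w i) = 0 \<Longrightarrow> i < N \<Longrightarrow> p dvd c i"
  unfolding indep_def by blast

lemma p_ge2: "p \<ge> 2" using pr by (simp add: prime_ge_2_int)

lemma eps_reduce: "eps * y = eps * (\<Sum>k<n. of_int (restrict (\<lambda>k. co y k mod p) {..<n} k) * b k)"
proof -
  have "eps * y = eps * (\<Sum>k<n. of_int (co y k) * b k)" using co by metis
  also have "\<dots> = (\<Sum>k<n. (eps * of_int (co y k)) * b k)"
    by (simp add: sum_distrib_left mult.assoc)
  also have "\<dots> = (\<Sum>k<n. (eps * of_int (restrict (\<lambda>k. co y k mod p) {..<n} k)) * b k)"
  proof (rule sum.cong[OF refl])
    fix k assume "k \<in> {..<n}"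
    have "p dvd co y k - co y k mod p" by (simp add: minus_mod_eq_mult_div)
    then have "eps * of_int (co y k) = eps * of_int (co y k mod p)" by (rule eps_cong)
    then show "eps * of_int (co y k) * b k = eps * of_int (restrict (\<lambda>k. co y k mod p) {..<n} k) * b k"
      using \<open>k \<in> {..<n}\<close> by simp
  qed
  also have "\<dots> = eps * (\<Sum>k<n. of_int (restrict (\<lambda>k. co y k mod p) {..<n} k) * b k)"
    by (simp add: sum_distrib_left mult.assoc)
  finally show ?thesis .
qed

lemma indep_le: assumes "indep w N" shows "N \<le> n"
proof -
  define A where "A = PiE {..<N} (\<lambda>_. {0..<p})"
  define A' where "A' = PiE {..<n} (\<lambda>_. {0..<p})"
  define f where "f c = eps * (\<Sum>i<N. of_int (c i) * w i)" for c
  define g where "g d = eps * (\<Sum>k<n. of_int (d k) * b k)" for d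
  have inj: "inj_on f A"
  proof (rule inj_onI)
    fix c c' assume c: "c \<in> A" and c': "c' \<in> A" and eq: "f c = f c'"
    have "eps * (\<Sum>i<N. of_int (c i - c' i) * w i) = f c - f c'"
      unfolding f_def by (simp add: sum_distrib_left algebra_simps sum_subtractf)
    then have "eps * (\<Sum>i<N. of_int (c i - c' i) * w i) = 0" using eq by simp
    then have "\<forall>i<N. p dvd c i - c' i" using indepD[OF assms, of "\<lambda>i. c i - c' i"] by blast
    show "c = c'"
    proof (rule PiE_ext[OF c[unfolded A_def] c'[unfolded A_def]])
      fix i assume i: "i \<in> {..<N}"
      have "p dvd c i - c' i" using \<open>\<forall>i<N. p dvd c i - c' i\<close> i by simp
      moreover have "c i \<in> {0..<p}" "c' i \<in> {0..<p}" using PiE_mem[OF c[unfolded A_def] i] PiE_mem[OF c'[unfolded A_def] i] by simp_all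
      ultimately show "c i = c' i"
      proof -
        assume d: "p dvd c i - c' i" and r: "c i \<in> {0..<p}" "c' i \<in> {0..<p}"
        show "c i = c' i"
        proof (rule ccontr)
          assume "c i \<noteq> c' i"
          then have "\<bar>p\<bar> \<le> \<bar>c i - c' i\<bar>" using dvd_imp_le_int[OF _ d] by simp
          then show False using r by (simp add: abs_if split: if_splits)
        qed
      qed
    qed
  qed
  have sub: "f ` A \<subseteq> g ` A'"
  proof
    fix y assume "y \<in> f ` A"
    then obtain c where y: "y = f c" by auto
    define X where "X = (\<Sum>i<N. of_int (c i) * w i)"
    have "y = eps * X" unfolding y f_def X_def ..
    also have "\<dots> = g (restrict (\<lambda>k. co X k mod p) {..<n})" unfolding g_def by (rule eps_reduce)
    finally have "y = g (restrict (\<lambda>k. co X k mod p) {..<n})" .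
    moreover have "restrict (\<lambda>k. co X k mod p) {..<n} \<in> A'"
      unfolding A'_def using p_ge2 by (auto simp: PiE_iff)
    ultimately show "y \<in> g ` A'" by blast
  qed
  have cA: "card A = nat p ^ N" unfolding A_def by (simp add: card_PiE)
  have cA': "card A' = nat p ^ n" unfolding A'_def by (simp add: card_PiE)
  have fA': "finite A'" unfolding A'_def by (intro finite_PiE) auto
  have "card A = card (f ` A)" using inj by (simp add: card_image)
  also have "\<dots> \<le> card (g ` A')" using sub fA' by (intro card_mono) auto
  also have "\<dots> \<le> card A'" using fA' by (rule card_image_le)
  finally have "nat p ^ N \<le> nat p ^ n" using cA cA' by simp
  moreover have "1 < nat p" using p_ge2 by simp
  ultimately show ?thesis using power_le_imp_le_exp by blast
qed

end



context zbp begin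

lemma inv_mod_p: assumes "\<not> p dvd c" shows "\<exists>d. p dvd d * c - 1"
proof -
  have "coprime p c" using pr assms by (simp add: prime_imp_coprime)
  then have "gcd c p = 1" by (simp add: gcd.commute coprime_iff_gcd_eq_1)
  then obtain u v where "u * c + v * p = 1" using bezout_int[of c p] by auto
  then have "d * c - 1 = - v * p" if "d = u" for d using that by algebra
  then show ?thesis by (metis dvd_triv_right dvd_minus_iff mult_minus_left)
qed

lemma indep_extend1:
  assumes ind: "indep w N" and ns: "\<not> inspan w N y"
  shows "indep (w(N := y)) (Suc N)"
  unfolding indep_def
proof (rule allI, rule impI)
  fix c assume h: "eps * (\<Sum>i<Suc N. of_int (c i) * (w(N:=y)) i) = 0"
  have "(\<Sum>i<N. of_int (c i) * (w(N:=y)) i) = (\<Sum>i<N. of_int (c i) * w i)"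
    by (rule sum.cong) auto
  then have s: "(\<Sum>i<Suc N. of_int (c i) * (w(N:=y)) i) = (\<Sum>i<N. of_int (c i) * w i) + of_int (c N) * y"
    by simp
  define S where "S = (\<Sum>i<N. of_int (c i) * w i)"
  have h2: "eps * S + eps * (of_int (c N) * y) = 0" using h s unfolding S_def by (simp add: distrib_left)
  show "\<forall>i<Suc N. p dvd c i"
  proof (cases "p dvd c N")
    case True
    then have "eps * (of_int (c N) * y) = 0" using eps_dvd by (metis mult.assoc mult_zero_left)
    then have "eps * S = 0" using h2 by simp
    then have "\<forall>i<N. p dvd c i" using indepD[OF ind] unfolding S_def by blast
    then show ?thesis using True less_Suc_eq by auto
  next
    case False
    obtain d where d: "p dvd d * c N - 1" using inv_mod_p[OF False] by blast
    have e1: "eps * of_int (d * c N) = eps" using eps_cong[OF d] by simp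
    have "eps * y = (eps * of_int (d * c N)) * y" using e1 by simp
    also have "\<dots> = of_int d * (eps * (of_int (c N) * y))" by (simp add: algebra_simps)
    also have "\<dots> = of_int d * (- (eps * S))" using h2 by (metis add.commute eq_neg_iff_add_eq_0)
    also have "\<dots> = eps * (\<Sum>i<N. of_int (- d * c i) * w i)"
      unfolding S_def by (simp add: sum_distrib_left algebra_simps sum_negf)
    finally have eqy: "eps * y = eps * (\<Sum>i<N. of_int (- d * c i) * w i)" .
    have "inspan w N y" unfolding inspan_def
      by (rule exI[where x = "\<lambda>i. - d * c i"]) (simp only: eqy)
    then show ?thesis using ns by blast
  qed
qed

lemma indep_extend:
  assumes ind: "indep w N" and inS: "\<forall>i<N. w i \<in> S"
  shows "\<exists>N' w'. N \<le> N' \<and> (\<forall>i<N. w' i = w i) \<and> indep w' N' \<and> (\<forall>i<N'. w' i \<in> S)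
           \<and> (\<forall>y\<in>S. inspan w' N' y)"
proof -
  define M where "M = {N'. \<exists>w'. N \<le> N' \<and> (\<forall>i<N. w' i = w i) \<and> indep w' N' \<and> (\<forall>i<N'. w' i \<in> S)}"
  have "M \<subseteq> {..n}" unfolding M_def using indep_le by auto
  then have fM: "finite M" by (rule finite_subset) simp
  have "N \<in> M" unfolding M_def using ind inS by blast
  define N0 where "N0 = Max M"
  have "N0 \<in> M" unfolding N0_def using fM \<open>N \<in> M\<close> by (intro Max_in) auto
  then obtain w0 where w0: "N \<le> N0" "\<forall>i<N. w0 i = w i" "indep w0 N0" "\<forall>i<N0. w0 i \<in> S"
    unfolding M_def by blast
  have "\<forall>y\<in>S. inspan w0 N0 y"
  proof (rule ccontr)
    assume "\<not> (\<forall>y\<in>S. inspan w0 N0 y)"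
    then obtain y where y: "y \<in> S" "\<not> inspan w0 N0 y" by blast
    have "Suc N0 \<in> M" unfolding M_def
    proof (intro CollectI exI conjI)
      show "N \<le> Suc N0" using w0 by simp
      show "\<forall>i<N. (w0(N0 := y)) i = w i" using w0 by auto
      show "indep (w0(N0 := y)) (Suc N0)" by (rule indep_extend1[OF w0(3) y(2)])
      show "\<forall>i<Suc N0. (w0(N0 := y)) i \<in> S" using w0(4) y(1) less_Suc_eq by auto
    qed
    then have "Suc N0 \<le> N0" unfolding N0_def using fM by (simp add: Max_ge)
    then show False by simp
  qed
  then show ?thesis using w0 by blast
qed

end



context zbp begin

lemma eps_lc: "eps * (\<Sum>i<N. of_int (f i) * w i) = (\<Sum>i<N. of_int (f i) * (eps * w i))"
  by (simp add: sum_distrib_left algebra_simps)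

lemma delta_sum: "i < (N::nat) \<Longrightarrow> (\<Sum>l<N. of_int (if l = i then 1 else 0) * w l) = (w i :: 'b)"
proof -
  assume i: "i < N"
  have "(\<Sum>l<N. of_int (if l = i then 1 else 0) * w l) = (\<Sum>l<N. if l = i then w l else 0)"
    by (rule sum.cong) auto
  also have "\<dots> = w i" using i by (subst sum.delta) auto
  finally show ?thesis .
qed

lemma trace_basis:
  fixes w :: "nat \<Rightarrow> 'b" and \<gamma> :: "nat \<Rightarrow> nat \<Rightarrow> int"
  assumes ind: "indep w N" and sp: "\<forall>y. inspan w N y"
    and hz: "\<forall>i<N. eps * (z * w i) = eps * (\<Sum>l<N. of_int (\<gamma> l i) * w l)"
  shows "eps * of_int (zmod_trace n b z) = eps * of_int (\<Sum>i<N. \<gamma> i i)"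
proof -
  have "\<forall>j. \<exists>c. eps * b j = eps * (\<Sum>i<N. of_int (c i) * w i)"
    using sp unfolding inspan_def by blast
  then obtain a where a: "\<And>j. eps * b j = eps * (\<Sum>i<N. of_int (a j i) * w i)"
    by metis
  define \<beta> where "\<beta> k i = co (w i) k" for k i
  have wexp: "w i = (\<Sum>k<n. of_int (\<beta> k i) * b k)" for i unfolding \<beta>_def by (rule co)
  have ew: "eps * w l = (\<Sum>k<n. of_int (\<beta> k l) * (eps * b k))" for l
    using eps_lc[where f="\<lambda>k. \<beta> k l" and w=b and N=n] wexp[of l] by metis
  have dual: "eps * of_int (\<Sum>k<n. a k l * \<beta> k i) = eps * of_int (if l = i then 1 else 0)"
    if l: "l < N" and i: "i < N" for l i
  proof -
    have "eps * w i = (\<Sum>k<n. of_int (\<beta> k i) * (eps * b k))" by (rule ew)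
    also have "\<dots> = (\<Sum>k<n. of_int (\<beta> k i) * (\<Sum>l<N. of_int (a k l) * (eps * w l)))"
      by (simp only: a eps_lc)
    also have "\<dots> = (\<Sum>k<n. \<Sum>l<N. of_int (\<beta> k i) * of_int (a k l) * (eps * w l))"
      by (simp add: sum_distrib_left mult.assoc)
    also have "\<dots> = (\<Sum>l<N. \<Sum>k<n. of_int (\<beta> k i) * of_int (a k l) * (eps * w l))"
      by (rule sum.swap)
    also have "\<dots> = (\<Sum>l<N. (\<Sum>k<n. of_int (\<beta> k i) * of_int (a k l)) * (eps * w l))"
      by (simp only: sum_distrib_right)
    also have "\<dots> = (\<Sum>l<N. of_int (\<Sum>k<n. a k l * \<beta> k i) * (eps * w l))"
      by (simp add: mult.commute)
    also have "\<dots> = eps * (\<Sum>l<N. of_int (\<Sum>k<n. a k l * \<beta> k i) * w l)"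
      by (rule eps_lc[symmetric])
    finally have e1: "eps * w i = eps * (\<Sum>l<N. of_int (\<Sum>k<n. a k l * \<beta> k i) * w l)" .
    have e2: "eps * w i = eps * (\<Sum>l<N. of_int (if l = i then 1 else 0) * w l)"
      using delta_sum[OF i, of w] by simp
    have "eps * (\<Sum>l<N. of_int ((\<Sum>k<n. a k l * \<beta> k i) - (if l = i then 1 else 0)) * w l)
        = eps * (\<Sum>l<N. of_int (\<Sum>k<n. a k l * \<beta> k i) * w l) - eps * (\<Sum>l<N. of_int (if l = i then 1 else 0) * w l)"
      by (simp only: of_int_diff left_diff_distrib sum_subtractf right_diff_distrib)
    also have "\<dots> = 0" using e1 e2 by simp
    finally have "p dvd (\<Sum>k<n. a k l * \<beta> k i) - (if l = i then 1 else 0)"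
      using indepD[OF ind, where c="\<lambda>l. (\<Sum>k<n. a k l * \<beta> k i) - (if l = i then 1 else 0)", OF _ l] by blast
    then show ?thesis by (rule eps_cong)
  qed
  have co_zb: "eps * of_int (co (z * b j) j) = eps * of_int (\<Sum>i<N. \<Sum>l<N. a j i * \<gamma> l i * \<beta> j l)"
    if j: "j < n" for j
  proof -
    define G where "G k = (\<Sum>i<N. \<Sum>l<N. a j i * \<gamma> l i * \<beta> k l)" for k
    have "eps * (z * b j) = z * (eps * b j)" by (simp only: mult.left_commute)
    also have "\<dots> = z * (\<Sum>i<N. of_int (a j i) * (eps * w i))" by (simp only: a eps_lc)
    also have "\<dots> = (\<Sum>i<N. of_int (a j i) * (eps * (z * w i)))"
      by (simp add: sum_distrib_left mult.left_commute)
    also have "\<dots> = (\<Sum>i<N. of_int (a j i) * (\<Sum>l<N. of_int (\<gamma> l i) * (eps * w l)))"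
    proof (rule sum.cong[OF refl])
      fix i assume "i \<in> {..<N}"
      then have "eps * (z * w i) = (\<Sum>l<N. of_int (\<gamma> l i) * (eps * w l))"
        using hz eps_lc by simp
      then show "of_int (a j i) * (eps * (z * w i)) = of_int (a j i) * (\<Sum>l<N. of_int (\<gamma> l i) * (eps * w l))"
        by simp
    qed
    also have "\<dots> = (\<Sum>i<N. of_int (a j i) * (\<Sum>l<N. of_int (\<gamma> l i) * (\<Sum>k<n. of_int (\<beta> k l) * (eps * b k))))"
      by (simp only: ew)
    also have "\<dots> = (\<Sum>i<N. \<Sum>l<N. \<Sum>k<n. of_int (a j i * \<gamma> l i * \<beta> k l) * (eps * b k))"
      by (simp add: sum_distrib_left mult.assoc)
    also have "\<dots> = (\<Sum>i<N. \<Sum>k<n. \<Sum>l<N. of_int (a j i * \<gamma> l i * \<beta> k l) * (eps * b k))"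
      by (rule sum.cong[OF refl], rule sum.swap)
    also have "\<dots> = (\<Sum>k<n. \<Sum>i<N. \<Sum>l<N. of_int (a j i * \<gamma> l i * \<beta> k l) * (eps * b k))"
      by (rule sum.swap)
    also have "\<dots> = (\<Sum>k<n. of_int (G k) * (eps * b k))"
      unfolding G_def by (simp add: sum_distrib_right)
    also have "\<dots> = eps * (\<Sum>k<n. of_int (G k) * b k)"
      by (rule eps_lc[symmetric])
    finally have "eps * (z * b j) = eps * (\<Sum>k<n. of_int (G k) * b k)" .
    then have "eps * (\<Sum>k<n. of_int (co (z * b j) k) * b k) = eps * (\<Sum>k<n. of_int (G k) * b k)"
      using co[of "z * b j"] by simp
    then have "p dvd co (z * b j) j - G j" using coord_unique j by blast
    then show ?thesis unfolding G_def by (rule eps_cong)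
  qed
  define D where "D i l = (\<Sum>j<n. a j i * \<beta> j l)" for i l
  have "eps * of_int (zmod_trace n b z) = (\<Sum>j<n. eps * of_int (co (z * b j) j))"
    by (simp add: tr_co sum_distrib_left)
  also have "\<dots> = (\<Sum>j<n. eps * of_int (\<Sum>i<N. \<Sum>l<N. a j i * \<gamma> l i * \<beta> j l))"
    by (rule sum.cong[OF refl]) (simp add: co_zb)
  also have "\<dots> = eps * of_int (\<Sum>j<n. \<Sum>i<N. \<Sum>l<N. a j i * \<gamma> l i * \<beta> j l)"
    by (simp only: of_int_sum sum_distrib_left)
  also have "(\<Sum>j<n. \<Sum>i<N. \<Sum>l<N. a j i * \<gamma> l i * \<beta> j l) = (\<Sum>i<N. \<Sum>j<n. \<Sum>l<N. a j i * \<gamma> l i * \<beta> j l)"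
    by (rule sum.swap)
  also have "\<dots> = (\<Sum>i<N. \<Sum>l<N. \<Sum>j<n. a j i * \<gamma> l i * \<beta> j l)"
    by (rule sum.cong[OF refl], rule sum.swap)
  also have "\<dots> = (\<Sum>i<N. \<Sum>l<N. \<gamma> l i * D i l)"
    unfolding D_def by (simp add: sum_distrib_left mult_ac)
  also have "eps * of_int \<dots> = (\<Sum>i<N. \<Sum>l<N. of_int (\<gamma> l i) * (eps * of_int (D i l)))"
    by (simp add: sum_distrib_left mult_ac)
  also have "\<dots> = (\<Sum>i<N. \<Sum>l<N. of_int (\<gamma> l i) * (eps * of_int (if i = l then 1 else 0)))"
    by (intro sum.cong refl) (metis D_def dual lessThan_iff)
  also have "\<dots> = (\<Sum>i<N. eps * of_int (\<gamma> i i))"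
  proof (rule sum.cong[OF refl])
    fix i assume i: "i \<in> {..<N}"
    have "(\<Sum>l<N. of_int (\<gamma> l i) * (eps * of_int (if i = l then 1 else 0))) =
          (\<Sum>l<N. if l = i then eps * of_int (\<gamma> i i) else (0::'b))"
      by (rule sum.cong) auto
    also have "\<dots> = eps * of_int (\<gamma> i i)" using i by (subst sum.delta) auto
    finally show "(\<Sum>l<N. of_int (\<gamma> l i) * (eps * of_int (if i = l then 1 else 0))) = eps * of_int (\<gamma> i i)" .
  qed
  also have "\<dots> = eps * of_int (\<Sum>i<N. \<gamma> i i)"
    by (simp add: sum_distrib_left)
  finally show ?thesis .
qed

end



context zbp begin

lemma nilp_trace:
  assumes zK: "z ^ K = 0"
  shows "p dvd zmod_trace n b z"
proof -
  have Q: "\<exists>N w. indep w N \<and> (\<forall>y. z ^ t * y = 0 \<longrightarrow> inspan w N y) \<and> (\<forall>i<N. z ^ t * w i = 0)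
      \<and> (\<forall>i<N. \<exists>c. eps * (z * w i) = eps * (\<Sum>l<i. of_int (c l) * w l))" for t
  proof (induction t)
    case 0
    have "indep (\<lambda>_. 0) 0" unfolding indep_def by simp
    moreover have "\<forall>y. z ^ 0 * y = 0 \<longrightarrow> inspan (\<lambda>_. 0) 0 y" unfolding inspan_def by simp
    ultimately show ?case by (intro exI[of _ 0] exI[of _ "\<lambda>_. 0"]) simp
  next
    case (Suc t)
    then obtain N w where w: "indep w N" "\<forall>y. z ^ t * y = 0 \<longrightarrow> inspan w N y" "\<forall>i<N. z ^ t * w i = 0"
      "\<forall>i<N. \<exists>c. eps * (z * w i) = eps * (\<Sum>l<i. of_int (c l) * w l)" by auto
    have inS: "\<forall>i<N. w i \<in> {y. z ^ Suc t * y = 0}" using w(3) by (simp add: mult.assoc)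
    obtain N' w' where w': "N \<le> N'" "\<forall>i<N. w' i = w i" "indep w' N'"
      "\<forall>i<N'. w' i \<in> {y. z ^ Suc t * y = 0}" "\<forall>y\<in>{y. z ^ Suc t * y = 0}. inspan w' N' y"
      using indep_extend[OF w(1) inS] by blast
    have tri: "\<forall>i<N'. \<exists>c. eps * (z * w' i) = eps * (\<Sum>l<i. of_int (c l) * w' l)"
    proof (intro allI impI)
      fix i assume i: "i < N'"
      show "\<exists>c. eps * (z * w' i) = eps * (\<Sum>l<i. of_int (c l) * w' l)"
      proof (cases "i < N")
        case True
        obtain c where c: "eps * (z * w i) = eps * (\<Sum>l<i. of_int (c l) * w l)" using w(4) True by blast
        have "(\<Sum>l<i. of_int (c l) * w' l) = (\<Sum>l<i. of_int (c l) * w l)"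
          using w'(2) True by (intro sum.cong) auto
        then show ?thesis using c by (intro exI[of _ c]) (simp add: w'(2) True)
      next
        case False
        have "z ^ t * (z * w' i) = z ^ Suc t * w' i" by (simp only: power_Suc2 mult.assoc)
        also have "\<dots> = 0" using w'(4) i by blast
        finally have "z ^ t * (z * w' i) = 0" .
        then have "inspan w N (z * w' i)" using w(2) by blast
        then obtain c where c: "eps * (z * w' i) = eps * (\<Sum>l<N. of_int (c l) * w l)"
          unfolding inspan_def by blast
        define c' where "c' l = (if l < N then c l else 0)" for l
        have "(\<Sum>l<i. of_int (c' l) * w' l) = (\<Sum>l<N. of_int (c' l) * w' l)"
          using False by (intro sum.mono_neutral_right) (auto simp: c'_def)
        also have "\<dots> = (\<Sum>l<N. of_int (c l) * w l)" using w'(2) by (intro sum.cong) (auto simp: c'_def)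
        finally show ?thesis using c by (intro exI[of _ c']) simp
      qed
    qed
    have "\<forall>y. z ^ Suc t * y = 0 \<longrightarrow> inspan w' N' y" using w'(5) by blast
    moreover have "\<forall>i<N'. z ^ Suc t * w' i = 0" using w'(4) by blast
    ultimately show ?case using w'(3) tri by (intro exI[of _ N'] exI[of _ w']) simp
  qed
  obtain N w where w: "indep w N" "\<forall>y. z ^ K * y = 0 \<longrightarrow> inspan w N y"
      "\<forall>i<N. \<exists>c. eps * (z * w i) = eps * (\<Sum>l<i. of_int (c l) * w l)" using Q[of K] by blast
  have sp: "\<forall>y. inspan w N y" using w(2) zK by simp
  obtain c where c: "\<forall>i<N. eps * (z * w i) = eps * (\<Sum>l<i. of_int (c i l) * w l)"
  proof -
    have "\<forall>i. \<exists>c. i < N \<longrightarrow> eps * (z * w i) = eps * (\<Sum>l<i. of_int (c l) * w l)" using w(3) by blast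
    then obtain c where "\<forall>i. i < N \<longrightarrow> eps * (z * w i) = eps * (\<Sum>l<i. of_int (c i l) * w l)"
      by (rule choice[THEN exE])
    then show ?thesis using that by blast
  qed
  define \<gamma> where "\<gamma> l i = (if l < i then c i l else 0)" for l i
  have hz: "\<forall>i<N. eps * (z * w i) = eps * (\<Sum>l<N. of_int (\<gamma> l i) * w l)"
  proof (intro allI impI)
    fix i assume i: "i < N"
    have "(\<Sum>l<N. of_int (\<gamma> l i) * w l) = (\<Sum>l<i. of_int (\<gamma> l i) * w l)"
      using i by (intro sum.mono_neutral_right) (auto simp: \<gamma>_def)
    also have "\<dots> = (\<Sum>l<i. of_int (c i l) * w l)" by (intro sum.cong) (auto simp: \<gamma>_def)
    finally show "eps * (z * w i) = eps * (\<Sum>l<N. of_int (\<gamma> l i) * w l)" using c i by simp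
  qed
  have "eps * of_int (zmod_trace n b z) = eps * of_int (\<Sum>i<N. \<gamma> i i)"
    by (rule trace_basis[OF w(1) sp hz])
  also have "(\<Sum>i<N. \<gamma> i i) = 0" by (simp add: \<gamma>_def)
  finally show ?thesis using eps_zero_iff by simp
qed

end



lemma sum_split_add: fixes r s :: nat shows "(\<Sum>i<r+s. f i) = (\<Sum>i<r. f i) + (\<Sum>j<s. f (r + j))"
  by (induction s) (simp_all add: ac_simps)

context zbp begin

lemma idem_zero:
  assumes ee: "e * e = e" and tr: "m dvd zmod_trace n b e" and np: "int n < p"
  shows "eps * e = 0"
proof -
  define S1 where "S1 = {y. e * y = y}"
  define S0 where "S0 = {y. e * y = 0}"
  have i0: "indep (\<lambda>_. 0) 0" unfolding indep_def by simp
  obtain r u where u: "indep u r" "\<forall>i<r. u i \<in> S1" "\<forall>y\<in>S1. inspan u r y"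
    using indep_extend[OF i0, of S1] by auto
  obtain s v where v: "indep v s" "\<forall>i<s. v i \<in> S0" "\<forall>y\<in>S0. inspan v s y"
    using indep_extend[OF i0, of S0] by auto
  define w where "w i = (if i < r then u i else v (i - r))" for i
  have split: "(\<Sum>i<r+s. of_int (c i) * w i) = (\<Sum>i<r. of_int (c i) * u i) + (\<Sum>j<s. of_int (c (r + j)) * v j)"
    for c :: "nat \<Rightarrow> int"
    unfolding sum_split_add w_def by simp
  have eU: "e * (\<Sum>i<r. of_int (c i) * u i) = (\<Sum>i<r. of_int (c i) * u i)" for c :: "nat \<Rightarrow> int"
  proof -
    have "e * (\<Sum>i<r. of_int (c i) * u i) = (\<Sum>i<r. of_int (c i) * (e * u i))"
      by (simp add: sum_distrib_left mult.left_commute)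
    also have "\<dots> = (\<Sum>i<r. of_int (c i) * u i)" using u(2) unfolding S1_def by (intro sum.cong) auto
    finally show ?thesis .
  qed
  have eV: "e * (\<Sum>j<s. of_int (c j) * v j) = 0" for c :: "nat \<Rightarrow> int"
  proof -
    have "e * (\<Sum>j<s. of_int (c j) * v j) = (\<Sum>j<s. of_int (c j) * (e * v j))"
      by (simp add: sum_distrib_left mult.left_commute)
    also have "\<dots> = 0" using v(2) unfolding S0_def by (intro sum.neutral) auto
    finally show ?thesis .
  qed
  have indw: "indep w (r + s)"
    unfolding indep_def
  proof (rule allI, rule impI)
    fix c assume h: "eps * (\<Sum>i<r+s. of_int (c i) * w i) = 0"
    define U where "U = (\<Sum>i<r. of_int (c i) * u i)"
    define V where "V = (\<Sum>j<s. of_int (c (r + j)) * v j)"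
    have h1: "eps * (U + V) = 0" using h split unfolding U_def V_def by simp
    have "e * (eps * (U + V)) = eps * (e * U + e * V)" by (simp add: algebra_simps)
    also have "\<dots> = eps * U" unfolding U_def V_def by (simp only: eU eV add_0_right)
    finally have "eps * U = e * (eps * (U + V))" by simp
    then have hU: "eps * U = 0" using h1 by simp
    then have hV: "eps * V = 0" using h1 by (simp add: distrib_left)
    have cu: "\<forall>i<r. p dvd c i" using indepD[OF u(1), of c] hU unfolding U_def by blast
    have cv: "\<forall>j<s. p dvd c (r + j)" using indepD[OF v(1), of "\<lambda>j. c (r + j)"] hV unfolding V_def by blast
    show "\<forall>i<r+s. p dvd c i"
    proof (intro allI impI)
      fix i assume "i < r + s"
      show "p dvd c i"
      proof (cases "i < r")
        case True then show ?thesis using cu by blast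
      next
        case False
        then have "i = r + (i - r)" "i - r < s" using \<open>i < r + s\<close> by auto
        then show ?thesis using cv by metis
      qed
    qed
  qed
  have spw: "\<forall>y. inspan w (r + s) y"
  proof
    fix y
    have "e * y \<in> S1" unfolding S1_def using ee by (simp add: mult.assoc[symmetric])
    then obtain c where c: "eps * (e * y) = eps * (\<Sum>i<r. of_int (c i) * u i)"
      using u(3) unfolding inspan_def by blast
    have "y - e * y \<in> S0" unfolding S0_def using ee by (simp add: right_diff_distrib mult.assoc[symmetric])
    then obtain d where d: "eps * (y - e * y) = eps * (\<Sum>j<s. of_int (d j) * v j)"
      using v(3) unfolding inspan_def by blast
    define cc where "cc i = (if i < r then c i else d (i - r))" for i
    have "(\<Sum>i<r+s. of_int (cc i) * w i) = (\<Sum>i<r. of_int (c i) * u i) + (\<Sum>j<s. of_int (d j) * v j)"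
      unfolding split cc_def by simp
    moreover have "eps * y = eps * (e * y) + eps * (y - e * y)" by (simp add: algebra_simps)
    ultimately have "eps * y = eps * (\<Sum>i<r+s. of_int (cc i) * w i)" using c d by (simp add: distrib_left)
    then show "inspan w (r + s) y" unfolding inspan_def by blast
  qed
  define \<gamma> where "\<gamma> l i = (if l = i \<and> i < r then 1 else 0 :: int)" for l i
  have hz: "\<forall>i<r+s. eps * (e * w i) = eps * (\<Sum>l<r+s. of_int (\<gamma> l i) * w l)"
  proof (intro allI impI)
    fix i assume i: "i < r + s"
    show "eps * (e * w i) = eps * (\<Sum>l<r+s. of_int (\<gamma> l i) * w l)"
    proof (cases "i < r")
      case True
      have "(\<Sum>l<r+s. of_int (\<gamma> l i) * w l) = (\<Sum>l<r+s. of_int (if l = i then 1 else 0) * w l)"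
        using True by (intro sum.cong) (auto simp: \<gamma>_def)
      also have "\<dots> = w i" using i by (rule delta_sum)
      finally show ?thesis using True u(2) unfolding w_def S1_def by simp
    next
      case False
      have "(\<Sum>l<r+s. of_int (\<gamma> l i) * w l) = 0"
        using False by (intro sum.neutral) (auto simp: \<gamma>_def)
      moreover have "e * w i = 0" using False i v(2) unfolding w_def S0_def by simp
      ultimately show ?thesis by simp
    qed
  qed
  have "eps * of_int (zmod_trace n b e) = eps * of_int (\<Sum>i<r+s. \<gamma> i i)"
    by (rule trace_basis[OF indw spw hz])
  also have "(\<Sum>i<r+s. \<gamma> i i) = int r"
    unfolding sum_split_add \<gamma>_def by simp
  finally have "eps * of_int (int r) = 0" using tr of_int_dvd_m by simp
  then have "p dvd int r" using eps_zero_iff by blast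
  moreover have "r + s \<le> n" using indep_le[OF indw] .
  ultimately have "r = 0"
  proof -
    assume pr': "p dvd int r" and rs: "r + s \<le> n"
    show "r = 0"
    proof (rule ccontr)
      assume "r \<noteq> 0"
      then have "p \<le> int r" using zdvd_imp_le[OF pr'] by simp
      moreover have "int r < p" using rs np by linarith
      ultimately show False by simp
    qed
  qed
  have "e \<in> S1" unfolding S1_def using ee by simp
  then have "inspan u r e" using u(3) by blast
  then show ?thesis unfolding inspan_def using \<open>r = 0\<close> by simp
qed

end



theorem proposition5p20:
  fixes m :: int and n :: nat and b :: "nat \<Rightarrow> 'b::comm_ring_1"
  assumes "squarefree m"
    and "(of_int m :: 'b) = 0"
    and "is_zmod_basis m n b"
    and "\<forall>p::int. prime p \<and> p dvd m \<longrightarrow> p > int n"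
  shows "trace_radical m n b = (nilradical :: 'b set)"
proof -
  interpret zb m n b using assms(2,3) by unfold_locales
  have mnz: "m \<noteq> 0" using assms(1) by (metis not_squarefree_0)
  show ?thesis
  proof (cases "n = 0")
    case True
    have all0: "(x::'b) = 0" for x using span_all[of x] True by simp
    have "trace_radical m n b = UNIV" unfolding trace_radical_def zmod_trace_def using True by simp
    moreover have "nilradical = (UNIV :: 'b set)" unfolding nilradical_def
      using all0 by (auto intro!: exI[of _ 1])
    ultimately show ?thesis by simp
  next
    case False
    then have npos: "n > 0" by simp
    have loc: "zbp m n b p" if "prime p" "p dvd m" for p
      using that npos mnz assms(2,3) by unfold_locales auto
    show ?thesis
    proof (rule set_eqI, rule iffI)
      fix x assume "x \<in> trace_radical m n b"
      then have tx: "\<forall>y. m dvd zmod_trace n b (x * y)" unfolding trace_radical_def by blast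
      obtain K u where K: "K \<ge> 1" "x ^ K = x ^ (2 * K) * u"
        using fitting[OF finite_B[OF mnz]] by blast
      define e where "e = x ^ K * u"
      have x2: "x ^ (2 * K) = x ^ K * x ^ K" by (simp add: mult_2 power_add)
      have ee: "e * e = e"
      proof -
        have "e * e = (x ^ (2 * K) * u) * u" unfolding e_def x2 by (simp add: ac_simps)
        also have "\<dots> = e" unfolding e_def using K(2) by simp
        finally show ?thesis .
      qed
      have xe: "x ^ K * e = x ^ K" unfolding e_def using K(2) x2 by (simp add: ac_simps)
      have "e = x * (x ^ (K - 1) * u)" unfolding e_def using K(1)
        by (metis mult.assoc power_eq_if not_one_le_zero)
      then have tre: "m dvd zmod_trace n b e" using tx by simp
      have "\<forall>k<n. m dvd co e k"
      proof (intro allI impI)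
        fix k assume k: "k < n"
        show "m dvd co e k"
        proof (rule squarefree_dvd_all[OF assms(1)], intro allI impI)
          fix p :: int assume p: "prime p \<and> p dvd m"
          interpret zbp m n b p using loc p by blast
          have "of_int (m div p) * e = 0" using idem_zero[OF ee tre] assms(4) p by blast
          then have "of_int (m div p) * (\<Sum>k<n. of_int (co e k) * b k) =
                     of_int (m div p) * (\<Sum>k<n. of_int ((\<lambda>_. 0) k) * b k)"
            using co[of e] by simp
          from coord_unique[OF this k] show "p dvd co e k" by simp
        qed
      qed
      then have "e = 0" using co[of e] of_int_dvd_m by (metis (no_types, lifting) lessThan_iff
            mult_zero_left sum.neutral)
      then have "x ^ K = 0" using xe by simp
      then show "x \<in> nilradical" unfolding nilradical_def by blast
    next
      fix x assume "x \<in> (nilradical :: 'b set)"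
      then obtain K where xK: "x ^ K = 0" unfolding nilradical_def by blast
      show "x \<in> trace_radical m n b" unfolding trace_radical_def
      proof (rule CollectI, rule allI)
        fix y
        have zK: "(x * y) ^ K = 0" using xK by (simp add: power_mult_distrib)
        show "m dvd zmod_trace n b (x * y)"
        proof (rule squarefree_dvd_all[OF assms(1)], intro allI impI)
          fix p :: int assume p: "prime p \<and> p dvd m"
          interpret zbp m n b p using loc p by blast
          show "p dvd zmod_trace n b (x * y)" by (rule nilp_trace[OF zK])
        qed
      qed
    qed
  qed
qed


end
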